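(* Let $n,k_1,k_2\in\mathbb N$ with $k_1+k_2<n$. Every Side-By-Side percentile mechanism, i.e. every percentile mechanism $\mathcal{PM}_{\vec v}$, $\vec v\in[0,1]^2$, that places the facility of capacity $k_1$ at $x_i$ and the facility of capacity $k_2$ at $x_{i+1}$ for some $i\in\{1,\dots,n-1\}$ (in sorted order), is Equilibrium Stable.
   Context: There are $n$ agents with positions $\vec x\in[0,1]^n$ and two facilities with capacities $k_1,k_2$; a location $\vec y=(y_1,y_2)$ places the facility of capacity $k_j$ at $y_j$. A fixed priority order breaks ties. FCFS game induced by $(\vec x,\vec y)$: each agent $i$ chooses $s_i\in\{1,2\}$; $\mathcal S_j$ = agents choosing $j$; $T_j\subseteq\mathcal S_j$ = the $\min(k_j,|\mathcal S_j|)$ agents of $\mathcal S_j$ closest to $y_j$ (ties by priority); utility $u_i=1-|x_i-y_j|$ if $i\in T_j$, else $0$. $NE(\vec x,\vec y)$ = set of pure Nash equilibria; $SW_\gamma=\sum_iu_i$. A mechanism $M:[0,1]^n\to\mathbb R^2$ is absolutely truthful if for every $i,\vec x,x_i'\in[0,1],\vec s_{-i}$: $\max_{s_i}u_i(\vec x,M(\vec x);s_i,\vec s_{-i})\ge\max_{s_i'}u_i(\vec x,M(x_i',\vec x_{-i});s_i',\vec s_{-i})$; it is Equilibrium Stable (ES) if it is absolutely truthful and for every $\vec x$ all $\gamma\in NE(\vec x,M(\vec x))$ give the same $SW_\gamma(\vec x,M(\vec x))$. Percentile mechanism $\mathcal{PM}_{\vec v}$: sort reports $x_1\le\dots\le x_n$,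 set $y_j=x_{\lfloor(n-1)v_j\rfloor+1}$. *)

theory Defs
  imports Main "HOL.Real"
begin

(* Agents are 0..n-1; positions x :: nat => real (only x i, i < n, matter).
   Priority: prio :: nat => nat injective on agents; smaller value = higher priority. *)

definition fpos :: "real \<times> real \<Rightarrow> nat \<Rightarrow> real" where
  "fpos y j = (if j = 1 then fst y else snd y)"

definition fcap :: "nat \<times> nat \<Rightarrow> nat \<Rightarrow> nat" where
  "fcap k j = (if j = 1 then fst k else snd k)"

definition choosers :: "nat \<Rightarrow> (nat \<Rightarrow> nat) \<Rightarrow> nat \<Rightarrow> nat set" where
  "choosers n s j = {i. i < n \<and> s i = j}"

definition precedes :: "(nat \<Rightarrow> nat) \<Rightarrow> (nat \<Rightarrow> real) \<Rightarrow> real \<times> real \<Rightarrow> nat \<Rightarrow> nat \<Rightarrow> nat \<Rightarrow> bool" where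
  "precedes prio x y j l i \<longleftrightarrow>
     \<bar>x l - fpos y j\<bar> < \<bar>x i - fpos y j\<bar> \<or>
     (\<bar>x l - fpos y j\<bar> = \<bar>x i - fpos y j\<bar> \<and> prio l < prio i)"

(* T_j: the min(k_j,|S_j|) agents of S_j closest to y_j, ties by priority *)
definition served :: "nat \<Rightarrow> nat \<times> nat \<Rightarrow> (nat \<Rightarrow> nat) \<Rightarrow> (nat \<Rightarrow> real) \<Rightarrow> real \<times> real
                       \<Rightarrow> (nat \<Rightarrow> nat) \<Rightarrow> nat \<Rightarrow> nat set" where
  "served n k prio x y s j =
     {i \<in> choosers n s j. card {l \<in> choosers n s j. precedes prio x y j l i} < fcap k j}"

definition util :: "nat \<Rightarrow> nat \<times> nat \<Rightarrow> (nat \<Rightarrow> nat) \<Rightarrow> (nat \<Rightarrow> real) \<Rightarrow> real \<times> real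
                     \<Rightarrow> (nat \<Rightarrow> nat) \<Rightarrow> nat \<Rightarrow> real" where
  "util n k prio x y s i =
     (if i \<in> served n k prio x y s (s i) then 1 - \<bar>x i - fpos y (s i)\<bar> else 0)"

definition profile :: "nat \<Rightarrow> (nat \<Rightarrow> nat) \<Rightarrow> bool" where
  "profile n s \<longleftrightarrow> (\<forall>i<n. s i \<in> {1, 2})"

definition positions :: "nat \<Rightarrow> (nat \<Rightarrow> real) \<Rightarrow> bool" where
  "positions n x \<longleftrightarrow> (\<forall>i<n. 0 \<le> x i \<and> x i \<le> 1)"

definition is_NE :: "nat \<Rightarrow> nat \<times> nat \<Rightarrow> (nat \<Rightarrow> nat) \<Rightarrow> (nat \<Rightarrow> real) \<Rightarrow> real \<times> real
                      \<Rightarrow> (nat \<Rightarrow> nat) \<Rightarrow> bool" where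
  "is_NE n k prio x y s \<longleftrightarrow> profile n s \<and>
     (\<forall>i<n. \<forall>a\<in>{1,2}. util n k prio x y (s(i := a)) i \<le> util n k prio x y s i)"

definition SW :: "nat \<Rightarrow> nat \<times> nat \<Rightarrow> (nat \<Rightarrow> nat) \<Rightarrow> (nat \<Rightarrow> real) \<Rightarrow> real \<times> real
                   \<Rightarrow> (nat \<Rightarrow> nat) \<Rightarrow> real" where
  "SW n k prio x y s = (\<Sum>i<n. util n k prio x y s i)"

definition best_util :: "nat \<Rightarrow> nat \<times> nat \<Rightarrow> (nat \<Rightarrow> nat) \<Rightarrow> (nat \<Rightarrow> real) \<Rightarrow> real \<times> real
                         \<Rightarrow> (nat \<Rightarrow> nat) \<Rightarrow> nat \<Rightarrow> real" where
  "best_util n k prio x y s i =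
     max (util n k prio x y (s(i := 1)) i) (util n k prio x y (s(i := 2)) i)"

definition absolutely_truthful :: "nat \<Rightarrow> nat \<times> nat \<Rightarrow> (nat \<Rightarrow> nat)
                                    \<Rightarrow> ((nat \<Rightarrow> real) \<Rightarrow> real \<times> real) \<Rightarrow> bool" where
  "absolutely_truthful n k prio M \<longleftrightarrow>
     (\<forall>i<n. \<forall>x x' s. positions n x \<and> 0 \<le> x' \<and> x' \<le> 1 \<and> profile n s \<longrightarrow>
        best_util n k prio x (M x) s i \<ge> best_util n k prio x (M (x(i := x'))) s i)"

definition equilibrium_stable :: "nat \<Rightarrow> nat \<times> nat \<Rightarrow> (nat \<Rightarrow> nat)
                                   \<Rightarrow> ((nat \<Rightarrow> real) \<Rightarrow> real \<times> real) \<Rightarrow> bool" where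
  "equilibrium_stable n k prio M \<longleftrightarrow> absolutely_truthful n k prio M \<and>
     (\<forall>x. positions n x \<longrightarrow>
        (\<forall>s s'. is_NE n k prio x (M x) s \<and> is_NE n k prio x (M x) s' \<longrightarrow>
           SW n k prio x (M x) s = SW n k prio x (M x) s'))"

(* 0-based index of the v-percentile: paper's x_{floor((n-1)v)+1} *)
definition pct_index :: "nat \<Rightarrow> real \<Rightarrow> nat" where
  "pct_index n v = nat \<lfloor>real (n - 1) * v\<rfloor>"

definition percentile_mech :: "nat \<Rightarrow> real \<times> real \<Rightarrow> (nat \<Rightarrow> real) \<Rightarrow> real \<times> real" where
  "percentile_mech n v x =
     (let xs = sort (map x [0..<n])
      in (xs ! pct_index n (fst v), xs ! pct_index n (snd v)))"

end

theory Submission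
  imports Defs
begin


lemma sorted_filter_dc:
  fixes ys :: "real list"
  assumes "sorted ys" "q < length ys" "\<And>a b. P b \<Longrightarrow> a \<le> b \<Longrightarrow> P a"
  shows "P (ys ! q) \<longleftrightarrow> q < length (filter P ys)"
  using assms
proof (induction ys arbitrary: q)
  case Nil then show ?case by simp
next
  case (Cons a ys)
  show ?case
  proof (cases "P a")
    case True
    then show ?thesis using Cons by (cases q) auto
  next
    case False
    have "\<forall>b\<in>set ys. \<not> P b" using Cons.prems False by (auto simp: sorted_simps)
    then have "filter P (a # ys) = []" using False by (simp add: filter_empty_conv)
    moreover have "\<not> P ((a#ys) ! q)"
      using Cons.prems \<open>\<forall>b\<in>set ys. \<not> P b\<close> False by (cases q) auto
    ultimately show ?thesis by simp
  qed
qed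

lemma ostat_count:
  fixes f :: "nat \<Rightarrow> real"
  assumes "q < n" "\<And>a b. P b \<Longrightarrow> a \<le> b \<Longrightarrow> P a"
  shows "P (sort (map f [0..<n]) ! q) \<longleftrightarrow> q < card {j. j < n \<and> P (f j)}"
proof -
  have "P (sort (map f [0..<n]) ! q) \<longleftrightarrow> q < length (filter P (sort (map f [0..<n])))"
    by (rule sorted_filter_dc) (use assms in auto)
  also have "length (filter P (sort (map f [0..<n]))) = length (filter P (map f [0..<n]))"
    by (simp add: filter_sort)
  also have "\<dots> = card {j. j < n \<and> P (f j)}"
    by (simp add: length_filter_conv_card cong: conj_cong)
  finally show ?thesis .
qed

lemma ostat_move:
  fixes x :: "nat \<Rightarrow> real" and r :: real
  assumes "q < n" "i < n"
  defines "y \<equiv> sort (map x [0..<n]) ! q"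
  defines "y' \<equiv> sort (map (x(i := r)) [0..<n]) ! q"
  shows "y = x i \<or> (x i < y \<and> y \<le> y') \<or> (y < x i \<and> y' \<le> y)"
proof -
  have A: "y \<le> y'" if "x i < y" 
  proof (rule ccontr)
    assume "\<not> y \<le> y'"
    define t where "t = max y' (x i)"
    have "t < y" using that \<open>\<not> y \<le> y'\<close> by (simp add: t_def)
    have "y' \<le> t" by (simp add: t_def)
    then have "q < card {j. j < n \<and> (x(i:=r)) j \<le> t}"
      using ostat_count[of q n "\<lambda>z. z \<le> t" "x(i:=r)"] assms unfolding y'_def by auto
    also have "\<dots> \<le> card {j. j < n \<and> x j \<le> t}"
      by (rule card_mono) (auto simp: t_def)
    finally have "y \<le> t"
      using ostat_count[of q n "\<lambda>z. z \<le> t" x] assms unfolding y_def by auto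
    then show False using \<open>t < y\<close> by simp
  qed
  have B: "y' \<le> y" if "y < x i" 
  proof (rule ccontr)
    assume "\<not> y' \<le> y"
    define t where "t = min y' (x i)"
    have "y < t" using that \<open>\<not> y' \<le> y\<close> by (simp add: t_def)
    then have "q < card {j. j < n \<and> x j < t}"
      using ostat_count[of q n "\<lambda>z. z < t" x] assms unfolding y_def by auto
    also have "\<dots> \<le> card {j. j < n \<and> (x(i:=r)) j < t}"
      by (rule card_mono) (auto simp: t_def)
    finally have "y' < t"
      using ostat_count[of q n "\<lambda>z. z < t" "x(i:=r)"] assms unfolding y'_def by auto
    then show False by (simp add: t_def)
  qed
  show ?thesis using A B by linarith
qed


lemma prec_irrefl: "\<not> precedes prio x y j l l"
  by (simp add: precedes_def)

lemma prec_trans: "precedes prio x y j a b \<Longrightarrow> precedes prio x y j b c \<Longrightarrow> precedes prio x y j a c"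
  unfolding precedes_def by auto

lemma prec_total: "inj_on prio {..<n} \<Longrightarrow> a < n \<Longrightarrow> b < n \<Longrightarrow> a \<noteq> b \<Longrightarrow>
   precedes prio x y j a b \<or> precedes prio x y j b a"
  unfolding precedes_def by (metis inj_on_def lessThan_iff linorder_neqE_linordered_idom linorder_neqE_nat)

locale tord =
  fixes S :: "nat set" and R :: "nat \<Rightarrow> nat \<Rightarrow> bool"
  assumes fin: "finite S"
    and irr: "\<And>a. \<not> R a a"
    and trn: "\<And>a b c. R a b \<Longrightarrow> R b c \<Longrightarrow> R a c"
    and tot: "\<And>a b. a \<in> S \<Longrightarrow> b \<in> S \<Longrightarrow> a \<noteq> b \<Longrightarrow> R a b \<or> R b a"
begin

definition rk where "rk b = card {l \<in> S. R l b}"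

lemma rk_less: "rk a < rk b" if "R a b" "a \<in> S"
proof -
  have "{l \<in> S. R l a} \<subseteq> {l \<in> S. R l b}" using trn that by blast
  moreover have "a \<in> {l \<in> S. R l b} - {l \<in> S. R l a}" using irr that by auto
  ultimately have "{l \<in> S. R l a} \<subset> {l \<in> S. R l b}" by blast
  then show ?thesis unfolding rk_def by (rule psubset_card_mono[rotated]) (use fin in auto)
qed

lemma rk_inj: "inj_on rk S"
  unfolding inj_on_def
  by (metis rk_less tot less_irrefl)

lemma card_low: "card {b \<in> S. rk b < k} \<le> k"
proof -
  have "card {b \<in> S. rk b < k} = card (rk ` {b \<in> S. rk b < k})"
    by (rule card_image[symmetric]) (rule inj_on_subset[OF rk_inj], auto)
  also have "\<dots> \<le> card {..<k}" by (rule card_mono) auto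
  finally show ?thesis by simp
qed

lemma card_below:
  assumes "k \<le> card {l \<in> S. R l i}"
  shows "k \<le> card {b \<in> {l \<in> S. R l i}. rk b < k}"
proof -
  define B where "B = {l \<in> S. R l i}"
  have finB: "finite B" using fin by (simp add: B_def)
  have injB: "inj_on rk B" by (rule inj_on_subset[OF rk_inj]) (auto simp: B_def)
  have sub: "rk ` B \<subseteq> {..<card B}"
  proof
    fix z assume "z \<in> rk ` B"
    then obtain b where b: "b \<in> B" "z = rk b" by auto
    have "{l \<in> S. R l b} \<subseteq> B - {b}" using b irr trn by (auto simp: B_def)
    then have "card {l \<in> S. R l b} \<le> card (B - {b})" using finB by (intro card_mono) auto
    also have "\<dots> < card B" using b finB by (intro card_Diff1_less)
    finally show "z \<in> {..<card B}" using b by (simp add: rk_def)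
  qed
  have eq: "rk ` B = {..<card B}"
    by (rule card_subset_eq) (use sub injB card_image in auto)
  have kB: "k \<le> card B" using assms by (simp add: B_def)
  have "{..<k} \<subseteq> rk ` {b \<in> B. rk b < k}"
  proof
    fix z assume z: "z \<in> {..<k}"
    then have "z \<in> rk ` B" using eq kB by auto
    then obtain b where "b \<in> B" "z = rk b" by auto
    then show "z \<in> rk ` {b \<in> B. rk b < k}" using z by auto
  qed
  then have "card {..<k} \<le> card (rk ` {b \<in> B. rk b < k})"
    by (intro card_mono) (use finB in auto)
  then have "k \<le> card (rk ` {b \<in> B. rk b < k})" by simp
  also have "\<dots> \<le> card {b \<in> B. rk b < k}" using finB by (intro card_image_le) auto
  finally show ?thesis by (simp add: B_def)
qed

end

lemma tord_prec: "inj_on prio {..<n} \<Longrightarrow> tord (choosers n s j) (precedes prio x y j)"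
  by unfold_locales (auto simp: choosers_def prec_irrefl intro: prec_trans dest: prec_total[of prio n _ _ x y j])

lemma served_rk: "inj_on prio {..<n} \<Longrightarrow> served n k prio x y s j =
   {b \<in> choosers n s j. tord.rk (choosers n s j) (precedes prio x y j) b < fcap k j}"
  using tord.rk_def[OF tord_prec] by (simp add: served_def)

lemma card_served: assumes "inj_on prio {..<n}" shows "card (served n k prio x y s j) \<le> fcap k j"
  unfolding served_rk[OF assms] by (rule tord.card_low[OF tord_prec[OF assms]])

lemma served_sub: "served n k prio x y s j \<subseteq> choosers n s j"
  by (auto simp: served_def)

lemma finite_served: "finite (served n k prio x y s j)"
  by (rule finite_subset[OF served_sub]) (simp add: choosers_def)

lemma not_served_dev:
  assumes inj: "inj_on prio {..<n}" and i: "i < n"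
    and ns: "i \<notin> served n k prio x y (s(i := j)) j"
  shows "fcap k j \<le> card {m \<in> served n k prio x y s j. precedes prio x y j m i}"
proof -
  interpret T: tord "choosers n s j" "precedes prio x y j" by (rule tord_prec[OF inj])
  have ch: "choosers n (s(i := j)) j = insert i (choosers n s j)"
    using i by (auto simp: choosers_def)
  have "{l \<in> choosers n (s(i := j)) j. precedes prio x y j l i} = {l \<in> choosers n s j. precedes prio x y j l i}"
    unfolding ch using prec_irrefl[of prio x y j i] by auto
  with ns i have K: "fcap k j \<le> card {l \<in> choosers n s j. precedes prio x y j l i}"
    by (auto simp: served_def choosers_def)
  have "fcap k j \<le> card {b \<in> {l \<in> choosers n s j. precedes prio x y j l i}. T.rk b < fcap k j}"
    by (rule T.card_below[OF K])
  also have "\<dots> \<le> card {m \<in> served n k prio x y s j. precedes prio x y j m i}"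
    by (rule card_mono) (auto simp: served_rk[OF inj] choosers_def)
  finally show ?thesis .
qed


lemma dist_mono1:
  fixes xi xl Y Y' :: real
  assumes rel: "Y = xi \<or> (xi < Y \<and> Y \<le> Y') \<or> (Y < xi \<and> Y' \<le> Y)"
  shows "\<bar>xl - Y\<bar> \<le> \<bar>xi - Y\<bar> \<Longrightarrow> \<bar>xl - Y'\<bar> \<le> \<bar>xi - Y'\<bar>"
    and "\<bar>xl - Y\<bar> < \<bar>xi - Y\<bar> \<Longrightarrow> \<bar>xl - Y'\<bar> < \<bar>xi - Y'\<bar>"
    and "\<bar>xi - Y\<bar> \<le> \<bar>xi - Y'\<bar>"
  using rel by linarith+

lemma prec_mono:
  assumes rel: "fpos y a = x i \<or> (x i < fpos y a \<and> fpos y a \<le> fpos y' a) \<or> (fpos y a < x i \<and> fpos y' a \<le> fpos y a)"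
    and p: "precedes prio x y a l i"
  shows "precedes prio x y' a l i"
proof -
  note d = dist_mono1(1,2)[OF rel, of "x l"]
  show ?thesis using p d unfolding precedes_def by (smt (verit))
qed

lemma util_mono:
  assumes "t i = a"
    and rel: "fpos y a = x i \<or> (x i < fpos y a \<and> fpos y a \<le> fpos y' a) \<or> (fpos y a < x i \<and> fpos y' a \<le> fpos y a)"
    and nn: "\<bar>x i - fpos y a\<bar> \<le> 1"
  shows "util n k prio x y' t i \<le> util n k prio x y t i"
proof -
  have sv: "i \<in> served n k prio x y t a" if "i \<in> served n k prio x y' t a"
  proof -
    have "card {l \<in> choosers n t a. precedes prio x y a l i} \<le> card {l \<in> choosers n t a. precedes prio x y' a l i}"
      by (rule card_mono) (use prec_mono[where y=y and a=a and x=x and i=i and y'=y', OF rel] in \<open>auto simp: choosers_def\<close>)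
    then show ?thesis using that by (auto simp: served_def)
  qed
  have "\<bar>x i - fpos y a\<bar> \<le> \<bar>x i - fpos y' a\<bar>" using dist_mono1(3)[OF rel] .
  then show ?thesis using sv nn assms(1) unfolding util_def by auto
qed

lemma sort_in01:
  assumes "q < n" "positions n x"
  shows "0 \<le> sort (map x [0..<n]) ! q \<and> sort (map x [0..<n]) ! q \<le> 1"
proof -
  have "sort (map x [0..<n]) ! q \<in> set (sort (map x [0..<n]))" using assms by (intro nth_mem) simp
  then obtain m where "m < n" "sort (map x [0..<n]) ! q = x m" by auto
  then show ?thesis using assms(2) by (auto simp: positions_def)
qed

lemma fpos_pm: "fpos (percentile_mech n v x) 1 = sort (map x [0..<n]) ! pct_index n (fst v)"
  "a \<noteq> 1 \<Longrightarrow> fpos (percentile_mech n v x) a = sort (map x [0..<n]) ! pct_index n (snd v)"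
  by (simp_all add: fpos_def percentile_mech_def Let_def)

lemma truthful_pm:
  assumes q1: "pct_index n (fst v) < n" and q2: "pct_index n (snd v) < n"
  shows "absolutely_truthful n k prio (percentile_mech n v)"
  unfolding absolutely_truthful_def
proof (intro allI impI)
  fix i x s and x' :: real
  assume i: "i < n" and h: "positions n x \<and> 0 \<le> x' \<and> x' \<le> 1 \<and> profile n s"
  have each: "util n k prio x (percentile_mech n v (x(i := x'))) (s(i := a)) i
      \<le> util n k prio x (percentile_mech n v x) (s(i := a)) i" for a
  proof (rule util_mono)
    show "(s(i := a)) i = a" by simp
    obtain q where q: "q < n" and fq: "\<And>z. fpos (percentile_mech n v z) a = sort (map z [0..<n]) ! q"
      using fpos_pm q1 q2 by metis
    show "fpos (percentile_mech n v x) a = x i \<or>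
      (x i < fpos (percentile_mech n v x) a \<and> fpos (percentile_mech n v x) a \<le> fpos (percentile_mech n v (x(i := x'))) a) \<or>
      (fpos (percentile_mech n v x) a < x i \<and> fpos (percentile_mech n v (x(i := x'))) a \<le> fpos (percentile_mech n v x) a)"
      unfolding fq using ostat_move[OF q i, of x x'] .
    show "\<bar>x i - fpos (percentile_mech n v x) a\<bar> \<le> 1"
      unfolding fq using sort_in01[OF q, of x] h i by (auto simp: positions_def)
  qed
  show "best_util n k prio x (percentile_mech n v (x(i := x'))) s i \<le> best_util n k prio x (percentile_mech n v x) s i"
    unfolding best_util_def using each[of 1] each[of 2] by linarith
qed


lemma util_cases:
  "util n k prio x y s i = (if i \<in> served n k prio x y s (s i) then 1 - \<bar>x i - fpos y (s i)\<bar> else 0)"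
  by (simp add: util_def)

lemma served_choice: "m \<in> served n k prio x y s a \<Longrightarrow> s m = a \<and> m < n"
  by (auto simp: served_def choosers_def)

lemma fin_step:
  assumes "m \<in> served n k prio x y s' a" "precedes prio x y a m i" "w = 1 - \<bar>x i - fpos y a\<bar>"
  shows "w \<le> util n k prio x y s' m \<and> (util n k prio x y s' m = w \<longrightarrow> prio m < prio i)"
proof -
  have "s' m = a" using served_choice[OF assms(1)] by simp
  then have u: "util n k prio x y s' m = 1 - \<bar>x m - fpos y a\<bar>" using assms(1) by (simp add: util_def)
  show ?thesis using assms(2,3) unfolding u precedes_def by auto
qed

locale ne_ctx =
  fixes n :: nat and k :: "nat \<times> nat" and prio :: "nat \<Rightarrow> nat" and x :: "nat \<Rightarrow> real" and y :: "real \<times> real"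
  assumes inj: "inj_on prio {..<n}"
    and H: "fpos y 1 = fpos y 2 \<or> (\<forall>m<n. \<bar>x m - fpos y 1\<bar> \<noteq> \<bar>x m - fpos y 2\<bar>)"
    and nn: "\<And>m j. m < n \<Longrightarrow> \<bar>x m - fpos y j\<bar> \<le> 1"
begin

abbreviation "U s i \<equiv> util n k prio x y s i"

lemma U_nonneg: "i < n \<Longrightarrow> 0 \<le> U s i"
  using nn[of i "s i"] by (simp add: util_def)

lemma step:
  assumes ne: "is_NE n k prio x y s" and ne': "is_NE n k prio x y s'" and i: "i < n"
    and lt: "U s' i < U s i"
  shows "\<exists>m<n. U s m \<noteq> U s' m \<and> U s i \<le> U s' m \<and> (U s' m = U s i \<longrightarrow> prio m < prio i)"
proof -
  define j where "j = s i"
  have j12: "j = 1 \<or> j = 2" using ne i by (auto simp: is_NE_def profile_def j_def)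
  have iserv: "i \<in> served n k prio x y s j"
    using lt U_nonneg[OF i, of s'] by (auto simp: util_def j_def split: if_splits)
  define w where "w = 1 - \<bar>x i - fpos y j\<bar>"
  have Ui: "U s i = w" using iserv by (simp add: util_def w_def j_def)
  have wpos: "0 < w" using lt Ui U_nonneg[OF i, of s'] by linarith
  have dev: "fcap k a \<le> card {m \<in> served n k prio x y s' a. precedes prio x y a m i}"
    if a: "a = 1 \<or> a = 2" and wa: "1 - \<bar>x i - fpos y a\<bar> = w" for a
  proof (rule not_served_dev[OF inj i])
    show "i \<notin> served n k prio x y (s'(i := a)) a"
    proof
      assume "i \<in> served n k prio x y (s'(i := a)) a"
      then have "U (s'(i := a)) i = w" using wa by (simp add: util_def)
      moreover have "U (s'(i := a)) i \<le> U s' i" using ne' i a by (auto simp: is_NE_def)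
      ultimately show False using lt Ui by linarith
    qed
  qed
  have cs: "card {l \<in> choosers n s j. precedes prio x y j l i} < fcap k j"
    using iserv by (simp add: served_def)
  have finch: "finite (choosers n s a)" for s a by (simp add: choosers_def)
  show ?thesis
  proof (cases "fpos y 1 = fpos y 2")
    case False
    with H have Hd: "\<forall>m<n. \<bar>x m - fpos y 1\<bar> \<noteq> \<bar>x m - fpos y 2\<bar>" by simp
    have P: "fcap k j \<le> card {m \<in> served n k prio x y s' j. precedes prio x y j m i}"
      using dev[OF j12] w_def by simp
    have "\<not> {m \<in> served n k prio x y s' j. precedes prio x y j m i} \<subseteq> {l \<in> choosers n s j. precedes prio x y j l i}"
    proof
      assume "{m \<in> served n k prio x y s' j. precedes prio x y j m i} \<subseteq> {l \<in> choosers n s j. precedes prio x y j l i}"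
      then have "card {m \<in> served n k prio x y s' j. precedes prio x y j m i} \<le> card {l \<in> choosers n s j. precedes prio x y j l i}"
        by (intro card_mono) (auto simp: choosers_def)
      then show False using P cs by linarith
    qed
    then obtain m where m: "m \<in> served n k prio x y s' j" "precedes prio x y j m i" "s m \<noteq> j"
      by (auto simp: choosers_def dest: served_choice)
    have mn: "m < n" and s'm: "s' m = j" using served_choice[OF m(1)] by auto
    have fs: "w \<le> U s' m \<and> (U s' m = w \<longrightarrow> prio m < prio i)"
      by (rule fin_step[OF m(1,2) w_def])
    have sm12: "s m = 1 \<or> s m = 2" using ne mn by (auto simp: is_NE_def profile_def)
    have "U s m \<noteq> U s' m"
    proof
      assume eq: "U s m = U s' m"
      have U's: "U s' m = 1 - \<bar>x m - fpos y j\<bar>" using m(1) s'm by (simp add: util_def)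
      show False
      proof (cases "m \<in> served n k prio x y s (s m)")
        case True
        then have "U s m = 1 - \<bar>x m - fpos y (s m)\<bar>" by (simp add: util_def)
        then have "\<bar>x m - fpos y (s m)\<bar> = \<bar>x m - fpos y j\<bar>" using eq U's by simp
        then show False using Hd mn sm12 j12 m(3) by auto
      next
        case False
        then have "U s m = 0" by (simp add: util_def)
        then show False using eq fs wpos by linarith
      qed
    qed
    then show ?thesis using mn fs Ui by auto
  next
    case True
    have fy: "fpos y a = fpos y 1" for a using True by (simp add: fpos_def)
    have pr: "precedes prio x y a = precedes prio x y 1" for a
      by (intro ext) (simp add: precedes_def fy[of a])
    define R where "R = precedes prio x y 1"
    define P where "P a = {m \<in> served n k prio x y s' a. R m i}" for a
    define Q where "Q a = {m \<in> served n k prio x y s a. R m i}" for a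
    have wa: "1 - \<bar>x i - fpos y a\<bar> = w" for a using fy[of a] fy[of j] by (simp add: w_def)
    have P1: "fcap k 1 \<le> card (P 1)" using dev[of 1] wa pr by (simp add: P_def R_def)
    have P2: "fcap k 2 \<le> card (P 2)" using dev[of 2] wa pr[of 2] by (simp add: P_def R_def)
    have finP: "finite (P a)" for a by (auto simp: P_def intro: finite_subset[OF _ finite_served])
    have finQ: "finite (Q a)" for a by (auto simp: Q_def intro: finite_subset[OF _ finite_served])
    have "P 1 \<inter> P 2 = {}"
    proof (rule ccontr)
      assume "P 1 \<inter> P 2 \<noteq> {}"
      then obtain z where "z \<in> served n k prio x y s' 1" "z \<in> served n k prio x y s' 2" by (auto simp: P_def)
      then have "s' z = 1" "s' z = 2" using served_choice by blast+
      then show False by simp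
    qed
    then have cP: "card (P 1 \<union> P 2) = card (P 1) + card (P 2)" using finP by (simp add: card_Un_disjoint)
    have Qa: "card (Q a) \<le> fcap k a" for a
    proof -
      have "card (Q a) \<le> card (served n k prio x y s a)"
        by (rule card_mono[OF finite_served]) (auto simp: Q_def)
      then show ?thesis using card_served[OF inj, of k x y s a] by linarith
    qed
    have Qj: "card (Q j) < fcap k j"
    proof -
      have "card (Q j) \<le> card {l \<in> choosers n s j. precedes prio x y j l i}"
        by (intro card_mono) (auto simp: Q_def R_def pr[of j] served_def choosers_def)
      then show ?thesis using cs by linarith
    qed
    have "card (Q 1 \<union> Q 2) \<le> card (Q 1) + card (Q 2)" by (rule card_Un_le)
    also have "\<dots> < fcap k 1 + fcap k 2" using Qa[of 1] Qa[of 2] Qj j12 by auto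
    finally have lt2: "card (Q 1 \<union> Q 2) < card (P 1 \<union> P 2)" using cP P1 P2 by linarith
    have "\<not> P 1 \<union> P 2 \<subseteq> Q 1 \<union> Q 2"
    proof
      assume "P 1 \<union> P 2 \<subseteq> Q 1 \<union> Q 2"
      then have "card (P 1 \<union> P 2) \<le> card (Q 1 \<union> Q 2)" using finQ by (intro card_mono) auto
      then show False using lt2 by linarith
    qed
    then obtain m a where m: "m \<in> served n k prio x y s' a" "R m i" "m \<notin> Q 1" "m \<notin> Q 2"
      by (auto simp: P_def)
    have mn: "m < n" using served_choice[OF m(1)] by auto
    have fs: "w \<le> U s' m \<and> (U s' m = w \<longrightarrow> prio m < prio i)"
      by (rule fin_step[OF m(1)]) (use m(2) pr[of a] wa[of a] in \<open>auto simp: R_def\<close>)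
    have sm12: "s m = 1 \<or> s m = 2" using ne mn by (auto simp: is_NE_def profile_def)
    have "m \<notin> served n k prio x y s (s m)" using m(2-4) sm12 by (auto simp: Q_def)
    then have "U s m = 0" by (simp add: util_def)
    then have "U s m \<noteq> U s' m" using fs wpos by linarith
    then show ?thesis using mn fs Ui by auto
  qed
qed

lemma ne_util_eq:
  assumes ne: "is_NE n k prio x y s" and ne': "is_NE n k prio x y s'"
  shows "\<forall>i<n. U s i = U s' i"
proof (rule ccontr)
  assume "\<not> (\<forall>i<n. U s i = U s' i)"
  define D where "D = {i. i < n \<and> U s i \<noteq> U s' i}"
  define M where "M i = max (U s i) (U s' i)" for i
  have Dne: "D \<noteq> {}" and finD: "finite D" using \<open>\<not> _\<close> by (auto simp: D_def)
  define Mx where "Mx = Max (M ` D)"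
  have Mmax: "M m \<le> Mx" if "m \<in> D" for m using that finD by (simp add: Mx_def)
  have "Mx \<in> M ` D" using Dne finD by (simp add: Mx_def)
  then have D2ne: "{i \<in> D. M i = Mx} \<noteq> {}" by auto
  define p0 where "p0 = Min (prio ` {i \<in> D. M i = Mx})"
  have "p0 \<in> prio ` {i \<in> D. M i = Mx}" using D2ne finD by (simp add: p0_def)
  then obtain i where iD: "i \<in> D" "M i = Mx" "prio i = p0" by auto
  have pmin: "prio i \<le> prio m" if "m \<in> D" "M m = Mx" for m
    using that finD iD(3) by (simp add: p0_def)
  have in_: "i < n" using iD by (simp add: D_def)
  show False
  proof (cases "U s' i < U s i")
    case True
    from step[OF ne ne' in_ True] obtain m where m: "m < n" "U s m \<noteq> U s' m" "U s i \<le> U s' m"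
      "U s' m = U s i \<longrightarrow> prio m < prio i" by blast
    have mD: "m \<in> D" using m by (simp add: D_def)
    have "M i = U s i" using True by (simp add: M_def)
    then have "U s' m = U s i" "M m = Mx" using Mmax[OF mD] m(3) iD(2) by (auto simp: M_def)
    then show False using pmin[OF mD] m(4) by simp
  next
    case False
    then have lt: "U s i < U s' i" using iD by (auto simp: D_def)
    from step[OF ne' ne in_ lt] obtain m where m: "m < n" "U s' m \<noteq> U s m" "U s' i \<le> U s m"
      "U s m = U s' i \<longrightarrow> prio m < prio i" by blast
    have mD: "m \<in> D" using m by (simp add: D_def)
    have "M i = U s' i" using lt by (simp add: M_def)
    then have "U s m = U s' i" "M m = Mx" using Mmax[OF mD] m(3) iD(2) by (auto simp: M_def)
    then show False using pmin[OF mD] m(4) by simp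
  qed
qed

end


theorem theorem7:
  fixes n k1 k2 :: nat and v :: "real \<times> real" and prio :: "nat \<Rightarrow> nat"
  assumes "k1 + k2 < n"
    and "inj_on prio {..<n}"
    and "0 \<le> fst v" "fst v \<le> 1" "0 \<le> snd v" "snd v \<le> 1"
    and "\<exists>i\<in>{1..n-1}. pct_index n (fst v) + 1 = i \<and> pct_index n (snd v) + 1 = i + 1"
  shows "equilibrium_stable n (k1, k2) prio (percentile_mech n v)"
proof -
  obtain p where p1: "pct_index n (fst v) = p" and p2: "pct_index n (snd v) = p + 1" and pn: "p + 1 < n"
    using assms(7) by fastforce
  have T: "absolutely_truthful n (k1, k2) prio (percentile_mech n v)"
    by (rule truthful_pm) (use p1 p2 pn in auto)
  have S: "SW n (k1, k2) prio x (percentile_mech n v x) s = SW n (k1, k2) prio x (percentile_mech n v x) s'"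
    if pos: "positions n x" and ne: "is_NE n (k1, k2) prio x (percentile_mech n v x) s"
      and ne': "is_NE n (k1, k2) prio x (percentile_mech n v x) s'" for x s s'
  proof -
    define xs where "xs = sort (map x [0..<n])"
    have f1: "fpos (percentile_mech n v x) 1 = xs ! p" using fpos_pm(1) p1 by (simp add: xs_def)
    have f2: "fpos (percentile_mech n v x) 2 = xs ! (p + 1)" using fpos_pm(2)[of 2] p2 by (simp add: xs_def)
    have fa: "fpos (percentile_mech n v x) a = xs ! p \<or> fpos (percentile_mech n v x) a = xs ! (p + 1)" for a
      using f1 f2 by (auto simp: fpos_def)
    have b1: "0 \<le> xs ! p \<and> xs ! p \<le> 1" using sort_in01[of p n x] pn pos by (simp add: xs_def)
    have b2: "0 \<le> xs ! (p+1) \<and> xs ! (p+1) \<le> 1" using sort_in01[of "p+1" n x] pn pos by (simp add: xs_def)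
    have srt: "sorted xs" by (simp add: xs_def)
    have len: "length xs = n" by (simp add: xs_def)
    have le12: "xs ! p \<le> xs ! (p + 1)" using sorted_nth_mono[OF srt, of p "p+1"] pn len by simp
    have side: "x m \<le> xs ! p \<or> xs ! (p + 1) \<le> x m" if "m < n" for m
    proof -
      have "x m \<in> set xs" using that by (simp add: xs_def)
      then obtain q where q: "q < n" "x m = xs ! q" by (metis in_set_conv_nth len)
      show ?thesis
      proof (cases "q \<le> p")
        case True then show ?thesis using sorted_nth_mono[OF srt True] q pn len by simp
      next
        case False then have pq: "p + 1 \<le> q" by simp
        then show ?thesis using sorted_nth_mono[OF srt pq] q len by simp
      qed
    qed
    interpret ne_ctx n "(k1, k2)" prio x "percentile_mech n v x"
    proof
      show "inj_on prio {..<n}" by (rule assms(2))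
      show "fpos (percentile_mech n v x) 1 = fpos (percentile_mech n v x) 2 \<or>
        (\<forall>m<n. \<bar>x m - fpos (percentile_mech n v x) 1\<bar> \<noteq> \<bar>x m - fpos (percentile_mech n v x) 2\<bar>)"
      proof (cases "xs ! p = xs ! (p + 1)")
        case True then show ?thesis using f1 f2 by simp
      next
        case False
        then have "xs ! p < xs ! (p + 1)" using le12 by simp
        then show ?thesis using side f1 f2 by fastforce
      qed
      show "\<bar>x m - fpos (percentile_mech n v x) j\<bar> \<le> 1" if "m < n" for m j
        using fa[of j] b1 b2 pos that by (auto simp: positions_def)
    qed
    have "\<forall>i<n. util n (k1, k2) prio x (percentile_mech n v x) s i = util n (k1, k2) prio x (percentile_mech n v x) s' i"
      by (rule ne_util_eq[OF ne ne'])
    then show ?thesis unfolding SW_def by (intro sum.cong) auto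
  qed
  show ?thesis unfolding equilibrium_stable_def using T S by blast
qed

end
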